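(* Let $X$ be a compact metrizable space, let $f\in\mathrm{C}(X)$ be self-adjoint, and let $\varepsilon>0$. Then there exist $n\in\mathbb N$ and self-adjoint $f_1,\dots,f_n\in\mathrm{C}(X)$ such that $\|f-f_i\|_\infty<\varepsilon$ for $i=1,\dots,n$, and $\frac1n\,|\{1\le i\le n: f_i(x)=0\}|<\varepsilon$ for all $x\in X$. *)

theory Defs
  imports "HOL-Analysis.Analysis"
begin

end

theory Submission
  imports Defs
begin

theorem lemma3p6:
  fixes T :: "'a topology" and f :: "'a \<Rightarrow> complex" and \<epsilon> :: real
  assumes "compact_space T" and "metrizable_space T"
    and "continuous_map T euclidean f"
    and "\<forall>x\<in>topspace T. f x \<in> \<real>"
    and "\<epsilon> > 0"
  shows "\<exists>(n::nat) (fs :: nat \<Rightarrow> 'a \<Rightarrow> complex). n \<ge> 1 \<and>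
     (\<forall>i\<in>{1..n}. continuous_map T euclidean (fs i) \<and> (\<forall>x\<in>topspace T. fs i x \<in> \<real>)
        \<and> (\<forall>x\<in>topspace T. norm (f x - fs i x) < \<epsilon>)) \<and>
     (\<forall>x\<in>topspace T. real (card {i\<in>{1..n}. fs i x = 0}) / real n < \<epsilon>)"
proof -
  obtain m :: nat where m: "1 / \<epsilon> < real m" using reals_Archimedean2 by blast
  define n where "n = Suc m"
  have n1: "n \<ge> 1" by (simp add: n_def)
  have npos: "real n > 0" by (simp add: n_def)
  have ninv: "1 / real n < \<epsilon>"
  proof -
    have "1 / \<epsilon> < real n" using m by (simp add: n_def)
    then show ?thesis using assms(5) npos by (simp add: field_simps)
  qed
  define c where "c i = real i * \<epsilon> / (2 * real n)" for i :: nat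
  define fs where "fs i x = f x + complex_of_real (c i)" for i x
  have cinj: "c i = c j \<Longrightarrow> i = j" for i j
    using assms(5) npos by (simp add: c_def field_simps)
  have cb: "\<bar>c i\<bar> < \<epsilon>" if "i \<in> {1..n}" for i
  proof -
    have "real i \<le> real n" using that by simp
    then have "real i * \<epsilon> \<le> real n * \<epsilon>" using assms(5) by (simp add: mult_right_mono)
    then have "c i \<le> \<epsilon> / 2" using npos by (simp add: c_def field_simps)
    moreover have "c i \<ge> 0" using assms(5) by (simp add: c_def)
    ultimately show ?thesis using assms(5) by simp
  qed
  have P1: "\<forall>i\<in>{1..n}. continuous_map T euclidean (fs i) \<and> (\<forall>x\<in>topspace T. fs i x \<in> \<real>)
        \<and> (\<forall>x\<in>topspace T. norm (f x - fs i x) < \<epsilon>)"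
  proof (rule ballI, intro conjI)
    fix i assume i: "i \<in> {1..n}"
    show "continuous_map T euclidean (fs i)"
      using assms(3) unfolding fs_def[abs_def] by (auto intro!: continuous_intros)
    show "\<forall>x\<in>topspace T. fs i x \<in> \<real>" using assms(4) unfolding fs_def by (auto intro!: Reals_add)
    show "\<forall>x\<in>topspace T. norm (f x - fs i x) < \<epsilon>" using cb[OF i] by (simp add: fs_def)
  qed
  have P2: "real (card {i\<in>{1..n}. fs i x = 0}) / real n < \<epsilon>" for x
  proof -
    have "card {i\<in>{1..n}. fs i x = 0} \<le> Suc 0"
    proof (subst card_le_Suc0_iff_eq, simp, intro ballI)
      fix a b assume "a \<in> {i\<in>{1..n}. fs i x = 0}" "b \<in> {i\<in>{1..n}. fs i x = 0}"
      then have "complex_of_real (c a) = complex_of_real (c b)"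
        by (simp add: fs_def eq_neg_iff_add_eq_0[symmetric] add_eq_0_iff)
      then show "a = b" using cinj by simp
    qed
    then have "real (card {i\<in>{1..n}. fs i x = 0}) / real n \<le> 1 / real n"
      using npos by (simp add: divide_right_mono)
    then show ?thesis using ninv by simp
  qed
  show ?thesis using n1 P1 P2 by blast
qed

end
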